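(* Let $S$ be a finite generating $2$-separable subset of an abelian group $G$ with $1\in S$ and $\mu(S)\le0$. Assume moreover that $|S|\ne|G|-6$ if $\mu(S)=0$. Let $M$ be a $2$-atom of $S$ with $1\in M$ which is not a subgroup. Then $|M|=2$.
   Context: For a group $G$ and $S\subseteq G$, $\mathrm{Cay}(G,S)$ is the graph on $G$ with arcs $(x,y)$, $x^{-1}y\in S$; the image of $X$ is $XS$. For a reflexive locally finite graph $\Gamma=(V,E)$, $\partial(X)=\Gamma(X)\setminus X$; $\Gamma$ is $k$-separable if some finite $X$ has $|X|\ge k$ and $|V\setminus\Gamma(X)|\ge k$; then $\kappa_k(\Gamma)=\min\{|\partial(X)|: X\text{ finite},|X|\ge k,|V\setminus\Gamma(X)|\ge k\}$, a $k$-fragment is such an $X$ attaining the minimum, and a $k$-atom is a $k$-fragment of minimum cardinality. For $S$ with $1\in S$, these notions for $S$ refer to $\mathrm{Cay}(\langle S\rangle,S)$; $S$ is $k$-separable if this graph is. The defect is $\mu(S)=\kappa_2(S)-|S|$. (If $G$ is infinite, the condition $|S|\ne|G|-6$ is automatic.) *)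

theory Defs
  imports "HOL-Algebra.Algebra"
begin

text \<open>Cayley graph Cay(<S>, S): vertex set <S> = generate Grp S, arcs (x, x s), s in S.
  The image (out-neighbourhood) of A is XS.\<close>

definition cay_image :: "('a, 'b) monoid_scheme \<Rightarrow> 'a set \<Rightarrow> 'a set \<Rightarrow> 'a set" where
  "cay_image Grp S A = (\<lambda>(x, s). x \<otimes>\<^bsub>Grp\<^esub> s) ` (A \<times> S)"

definition cay_boundary :: "('a, 'b) monoid_scheme \<Rightarrow> 'a set \<Rightarrow> 'a set \<Rightarrow> 'a set" where
  "cay_boundary Grp S A = cay_image Grp S A - A"

definition card_ge :: "'a set \<Rightarrow> nat \<Rightarrow> bool" where
  "card_ge A k \<longleftrightarrow> infinite A \<or> k \<le> card A"

definition k_admissible :: "('a, 'b) monoid_scheme \<Rightarrow> 'a set \<Rightarrow> nat \<Rightarrow> 'a set \<Rightarrow> bool" where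
  "k_admissible Grp S k A \<longleftrightarrow> A \<subseteq> generate Grp S \<and> finite A \<and> k \<le> card A
     \<and> card_ge (generate Grp S - cay_image Grp S A) k"

definition k_separable :: "('a, 'b) monoid_scheme \<Rightarrow> 'a set \<Rightarrow> nat \<Rightarrow> bool" where
  "k_separable Grp S k \<longleftrightarrow> (\<exists>A. k_admissible Grp S k A)"

definition kappa :: "('a, 'b) monoid_scheme \<Rightarrow> 'a set \<Rightarrow> nat \<Rightarrow> nat" where
  "kappa Grp S k = (LEAST n. \<exists>A. k_admissible Grp S k A \<and> card (cay_boundary Grp S A) = n)"

definition k_fragment :: "('a, 'b) monoid_scheme \<Rightarrow> 'a set \<Rightarrow> nat \<Rightarrow> 'a set \<Rightarrow> bool" where
  "k_fragment Grp S k A \<longleftrightarrow> k_admissible Grp S k A \<and> card (cay_boundary Grp S A) = kappa Grp S k"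

definition k_atom :: "('a, 'b) monoid_scheme \<Rightarrow> 'a set \<Rightarrow> nat \<Rightarrow> 'a set \<Rightarrow> bool" where
  "k_atom Grp S k A \<longleftrightarrow> k_fragment Grp S k A \<and> (\<forall>B. k_fragment Grp S k B \<longrightarrow> card A \<le> card B)"

definition defect :: "('a, 'b) monoid_scheme \<Rightarrow> 'a set \<Rightarrow> int" where
  "defect Grp S = int (kappa Grp S 2) - int (card S)"

end

theory Submission
  imports Defs
begin


locale ctx = comm_group G for G (structure) +
  fixes S :: "'a set"
  assumes finS: "finite S" and SG: "S \<subseteq> carrier G" and oneS: "\<one> \<in> S"
    and gen: "generate G S = carrier G"
begin

abbreviation img where "img \<equiv> cay_image G S"
abbreviation adm where "adm \<equiv> k_admissible G S 2"
definition dl :: "'a set \<Rightarrow> int" where "dl A = int (card (img A)) - int (card A)"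
definition tr :: "'a \<Rightarrow> 'a set \<Rightarrow> 'a set" where "tr g A = (\<lambda>a. a \<otimes> g) ` A"

lemma img_def: "img A = {a \<otimes> s | a s. a \<in> A \<and> s \<in> S}"
  unfolding cay_image_def by auto

lemma img_iff: "z \<in> img A \<longleftrightarrow> (\<exists>a\<in>A. \<exists>s\<in>S. z = a \<otimes> s)"
  unfolding img_def by auto

lemma img_sub: "A \<subseteq> carrier G \<Longrightarrow> img A \<subseteq> carrier G"
  using SG by (auto simp: img_iff intro!: m_closed)

lemma img_fin: "finite A \<Longrightarrow> finite (img A)"
  unfolding cay_image_def using finS by auto

lemma sub_img: "A \<subseteq> carrier G \<Longrightarrow> A \<subseteq> img A"
  using oneS by (force simp: img_iff)

lemma img_mono: "A \<subseteq> B \<Longrightarrow> img A \<subseteq> img B"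
  unfolding cay_image_def by blast

lemma img_Un: "img (A \<union> B) = img A \<union> img B"
  unfolding cay_image_def by blast

lemma img_Int: "img (A \<inter> B) \<subseteq> img A \<inter> img B"
  unfolding cay_image_def by blast

lemma card_img_ge: "finite A \<Longrightarrow> A \<subseteq> carrier G \<Longrightarrow> card A \<le> card (img A)"
  by (meson card_mono img_fin sub_img)

lemma bd_eq: "finite A \<Longrightarrow> A \<subseteq> carrier G \<Longrightarrow> int (card (cay_boundary G S A)) = dl A"
  unfolding cay_boundary_def dl_def
  by (simp add: card_Diff_subset card_img_ge img_fin sub_img finite_subset of_nat_diff)

lemma submod:
  assumes "finite A" "finite B" "A \<subseteq> carrier G" "B \<subseteq> carrier G"
  shows "dl (A \<union> B) + dl (A \<inter> B) \<le> dl A + dl B"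
proof -
  have f: "finite (img A)" "finite (img B)" using assms img_fin by auto
  have 1: "card (img (A \<inter> B)) \<le> card (img A \<inter> img B)"
    using f img_Int by (meson card_mono finite_Int)
  have 2: "card (img A \<union> img B) + card (img A \<inter> img B) = card (img A) + card (img B)"
    using card_Un_Int[OF f] by simp
  have 3: "card (A \<union> B) + card (A \<inter> B) = card A + card B"
    using card_Un_Int[OF assms(1,2)] by simp
  show ?thesis unfolding dl_def img_Un using 1 2 3 by linarith
qed

lemma adm_iff: "adm A \<longleftrightarrow> A \<subseteq> carrier G \<and> finite A \<and> 2 \<le> card A \<and> card_ge (carrier G - img A) 2"
  unfolding k_admissible_def gen by auto

lemma card_ge_mono: "card_ge A k \<Longrightarrow> A \<subseteq> B \<Longrightarrow> card_ge B k"
  unfolding card_ge_def by (meson card_mono infinite_super le_trans)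

lemma adm_subset: "adm B \<Longrightarrow> A \<subseteq> B \<Longrightarrow> 2 \<le> card A \<Longrightarrow> adm A"
  unfolding adm_iff
  by (meson Diff_mono card_ge_mono dual_order.trans finite_subset img_mono order_refl)


lemma card_ge_fin: "card_ge A k \<Longrightarrow> finite A \<Longrightarrow> k \<le> card A"
  unfolding card_ge_def by auto

lemma K_le: "adm A \<Longrightarrow> int (kappa G S 2) \<le> dl A"
proof -
  assume a: "adm A"
  have "kappa G S 2 \<le> card (cay_boundary G S A)"
    unfolding kappa_def by (rule Least_le) (use a in blast)
  moreover have "int (card (cay_boundary G S A)) = dl A"
    using a bd_eq adm_iff by blast
  ultimately show ?thesis by linarith
qed

lemma notadm:
  assumes "A \<subseteq> carrier G" "finite A" "2 \<le> card A" "\<not> adm A"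
  shows "finite (carrier G) \<and> card (carrier G) \<le> card (img A) + 1"
proof -
  have "\<not> card_ge (carrier G - img A) 2" using assms adm_iff by blast
  hence f: "finite (carrier G - img A)" "card (carrier G - img A) \<le> 1"
    unfolding card_ge_def by auto
  have fi: "finite (img A)" using assms img_fin by blast
  have e: "carrier G = img A \<union> (carrier G - img A)" using img_sub assms by blast
  have "finite (carrier G)" using e f fi by (metis finite_UnI)
  moreover have "card (carrier G) \<le> card (img A) + card (carrier G - img A)"
    using e card_Un_le by metis
  ultimately show ?thesis using f by linarith
qed

lemma tr_sub: "g \<in> carrier G \<Longrightarrow> A \<subseteq> carrier G \<Longrightarrow> tr g A \<subseteq> carrier G"
  unfolding tr_def by auto

lemma tr_inj: "g \<in> carrier G \<Longrightarrow> inj_on (\<lambda>a. a \<otimes> g) (carrier G)"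
  unfolding inj_on_def by auto

lemma tr_card: "g \<in> carrier G \<Longrightarrow> A \<subseteq> carrier G \<Longrightarrow> card (tr g A) = card A"
  unfolding tr_def by (rule card_image, rule inj_on_subset[OF tr_inj]) auto

lemma tr_fin: "finite A \<Longrightarrow> finite (tr g A)"
  unfolding tr_def by auto

lemma img_tr: "g \<in> carrier G \<Longrightarrow> A \<subseteq> carrier G \<Longrightarrow> img (tr g A) = tr g (img A)"
proof -
  assume g: "g \<in> carrier G" and A: "A \<subseteq> carrier G"
  have c: "(a \<otimes> g) \<otimes> s = (a \<otimes> s) \<otimes> g" if "a \<in> A" "s \<in> S" for a s
    using that g A SG by (metis m_assoc m_comm subsetD)
  show ?thesis
  proof
    show "img (tr g A) \<subseteq> tr g (img A)"
      unfolding tr_def img_iff using c by (force simp: img_iff)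
    show "tr g (img A) \<subseteq> img (tr g A)"
      unfolding tr_def using c by (force simp: img_iff)
  qed
qed

lemma dl_tr: "g \<in> carrier G \<Longrightarrow> A \<subseteq> carrier G \<Longrightarrow> dl (tr g A) = dl A"
  unfolding dl_def by (simp add: img_tr tr_card img_sub)

lemma tr_diff: "g \<in> carrier G \<Longrightarrow> Q \<subseteq> carrier G \<Longrightarrow> carrier G - tr g Q = tr g (carrier G - Q)"
proof -
  assume g: "g \<in> carrier G" and Q: "Q \<subseteq> carrier G"
  show ?thesis
  proof
    show "carrier G - tr g Q \<subseteq> tr g (carrier G - Q)"
    proof
      fix w assume w: "w \<in> carrier G - tr g Q"
      have wG: "w \<in> carrier G" using w by blast
      have e: "w = (w \<otimes> inv g) \<otimes> g" using wG g by (simp add: m_assoc)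
      have "w \<otimes> inv g \<notin> Q"
      proof
        assume "w \<otimes> inv g \<in> Q"
        hence "(w \<otimes> inv g) \<otimes> g \<in> tr g Q" unfolding tr_def by blast
        thus False using e w by simp
      qed
      moreover have "w \<otimes> inv g \<in> carrier G" using wG g by simp
      ultimately show "w \<in> tr g (carrier G - Q)" unfolding tr_def using e by blast
    qed
    show "tr g (carrier G - Q) \<subseteq> carrier G - tr g Q"
      unfolding tr_def using g Q by auto
  qed
qed

lemma card_ge_img: "inj_on f A \<Longrightarrow> card_ge A k \<Longrightarrow> card_ge (f ` A) k"
  unfolding card_ge_def by (simp add: card_image finite_image_iff)

lemma adm_tr: "adm A \<Longrightarrow> g \<in> carrier G \<Longrightarrow> adm (tr g A)"
proof -
  assume a: "adm A" and g: "g \<in> carrier G"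
  have A: "A \<subseteq> carrier G" "finite A" "2 \<le> card A" "card_ge (carrier G - img A) 2"
    using a adm_iff by auto
  have "carrier G - img (tr g A) = tr g (carrier G - img A)"
    using g A img_tr tr_diff img_sub by simp
  moreover have "card_ge (tr g (carrier G - img A)) 2"
    unfolding tr_def by (rule card_ge_img) (use A inj_on_subset[OF tr_inj[OF g], of "carrier G - img A"] in auto)
  ultimately show ?thesis using A g adm_iff tr_sub tr_card tr_fin by auto
qed

end

locale ctx2 = ctx +
  fixes M :: "'a set"
  assumes sep: "k_separable G S 2" and atom: "k_atom G S 2 M" and oneM: "\<one> \<in> M"
    and kS: "kappa G S 2 \<le> card S"
begin

abbreviation "K \<equiv> kappa G S 2"

lemma admM: "adm M" using atom unfolding k_atom_def k_fragment_def by blast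
lemma MG: "M \<subseteq> carrier G" and finM: "finite M" and cardM2: "2 \<le> card M"
  using admM adm_iff by auto

lemma dlM: "dl M = int K"
  using atom unfolding k_atom_def k_fragment_def using bd_eq MG finM by metis

lemma small: "adm Q \<Longrightarrow> card Q < card M \<Longrightarrow> int K + 1 \<le> dl Q"
proof (rule ccontr)
  assume a: "adm Q" "card Q < card M" "\<not> int K + 1 \<le> dl Q"
  hence "dl Q = int K" using K_le by force
  hence "card (cay_boundary G S Q) = K" using bd_eq a adm_iff by (metis of_nat_eq_iff)
  hence "k_fragment G S 2 Q" using a unfolding k_fragment_def by blast
  hence "card M \<le> card Q" using atom unfolding k_atom_def by blast
  thus False using a by linarith
qed

lemma ND:
  assumes fin: "finite (carrier G)" and a: "adm Q" and d: "dl Q \<le> int K"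
  shows "card M + card (img Q) \<le> card (carrier G)"
proof -
  have Q: "Q \<subseteq> carrier G" "finite Q" "2 \<le> card Q" "card_ge (carrier G - img Q) 2"
    using a adm_iff by auto
  define Cx where "Cx = carrier G - img Q"
  define Y where "Y = (\<lambda>c. inv c) ` Cx"
  have CxG: "Cx \<subseteq> carrier G" unfolding Cx_def by blast
  have YG: "Y \<subseteq> carrier G" unfolding Y_def using CxG by auto
  have cY: "card Y = card Cx" unfolding Y_def
    by (meson CxG card_image inj_on_subset inv_inj)
  have finCx: "finite Cx" using fin CxG finite_subset by blast
  have c2: "2 \<le> card Cx" using Q(4) finCx card_ge_fin Cx_def by blast
  have imgXG: "img Q \<subseteq> carrier G" using img_sub Q by blast
  have key: "img Y \<subseteq> carrier G - (\<lambda>c. inv c) ` Q"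
  proof
    fix w assume "w \<in> img Y"
    then obtain c s where cs: "c \<in> Cx" "s \<in> S" "w = inv c \<otimes> s" unfolding img_iff Y_def by blast
    have cG: "c \<in> carrier G" and sG: "s \<in> carrier G" using cs CxG SG by auto
    have "w \<notin> (\<lambda>c. inv c) ` Q"
    proof
      assume "w \<in> (\<lambda>c. inv c) ` Q"
      then obtain x where x: "x \<in> Q" "w = inv x" by blast
      have xG: "x \<in> carrier G" using x Q by auto
      have "inv c \<otimes> s = inv x" using cs x by simp
      hence "c \<otimes> (inv c \<otimes> s) \<otimes> x = c \<otimes> inv x \<otimes> x" by simp
      have l: "c \<otimes> (inv c \<otimes> s) \<otimes> x = s \<otimes> x" using cG sG xG
        by (simp add: m_assoc[symmetric])
      have r: "c \<otimes> inv x \<otimes> x = c" using cG xG by (simp add: m_assoc)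
      have "s \<otimes> x = c" using l r \<open>c \<otimes> (inv c \<otimes> s) \<otimes> x = c \<otimes> inv x \<otimes> x\<close> by simp
      hence "c = x \<otimes> s" using sG xG m_comm by auto
      hence "c \<in> img Q" using x cs unfolding img_iff by blast
      thus False using cs Cx_def by blast
    qed
    moreover have "w \<in> carrier G" using cs cG sG by simp
    ultimately show "w \<in> carrier G - (\<lambda>c. inv c) ` Q" by blast
  qed
  have ciX: "card ((\<lambda>c. inv c) ` Q) = card Q" by (meson Q(1) card_image inj_on_subset inv_inj)
  have iXG: "(\<lambda>c. inv c) ` Q \<subseteq> carrier G" using Q by auto
  have cimgY: "card (img Y) \<le> card (carrier G) - card Q"
  proof -
    have "card (img Y) \<le> card (carrier G - (\<lambda>c. inv c) ` Q)"
      by (rule card_mono[OF _ key]) (use fin in blast)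
    also have "\<dots> = card (carrier G) - card ((\<lambda>c. inv c) ` Q)"
      by (rule card_Diff_subset) (use Q(2) iXG in auto)
    finally show ?thesis using ciX by simp
  qed
  have cCx: "card Cx = card (carrier G) - card (img Q)"
    unfolding Cx_def using card_Diff_subset imgXG img_fin Q by metis
  have cXle: "card Q \<le> card (carrier G)" using Q fin card_mono by metis
  have cIle: "card (img Q) \<le> card (carrier G)" using imgXG fin card_mono by metis
  have dY: "dl Y \<le> dl Q" unfolding dl_def using cimgY cY cCx cXle cIle by linarith
  have finY: "finite Y" using finCx Y_def by blast
  have admY: "adm Y"
  proof -
    have "(\<lambda>c. inv c) ` Q \<subseteq> carrier G - img Y" using key iXG by blast
    moreover have "card_ge ((\<lambda>c. inv c) ` Q) 2" unfolding card_ge_def using ciX Q by auto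
    ultimately have "card_ge (carrier G - img Y) 2" using card_ge_mono by blast
    thus ?thesis using adm_iff YG finY cY c2 by auto
  qed
  have "dl Y = int K" using K_le[OF admY] dY d by linarith
  hence "card (cay_boundary G S Y) = K" using bd_eq admY adm_iff by (metis of_nat_eq_iff)
  hence "k_fragment G S 2 Y" using admY unfolding k_fragment_def by blast
  hence "card M \<le> card Y" using atom unfolding k_atom_def by blast
  thus ?thesis using cY cCx cIle by linarith
qed

end



context ctx2 begin

lemma dl_card: "int (card (img A)) = int (card A) + dl A"
  unfolding dl_def by simp

lemma trM: "g \<in> carrier G \<Longrightarrow> adm (tr g M) \<and> dl (tr g M) = int K \<and> card (tr g M) = card M
   \<and> tr g M \<subseteq> carrier G \<and> finite (tr g M)"
proof -
  assume g: "g \<in> carrier G"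
  have 1: "adm (tr g M)" using adm_tr[OF admM g] .
  have 2: "dl (tr g M) = int K" using dl_tr[OF g MG] dlM by simp
  have 3: "card (tr g M) = card M" using tr_card[OF g MG] .
  have 4: "tr g M \<subseteq> carrier G" using tr_sub[OF g MG] .
  have 5: "finite (tr g M)" using tr_fin[OF finM] .
  show ?thesis using 1 2 3 4 5 by blast
qed

lemma img_M: "int (card (img M)) = int (card M) + int K"
  using dl_card dlM by simp

lemma NDM: "finite (carrier G) \<Longrightarrow> 2 * card M + K \<le> card (carrier G)"
proof -
  assume f: "finite (carrier G)"
  have "card M + card (img M) \<le> card (carrier G)" using ND[OF f admM] dlM by simp
  thus ?thesis using img_M by linarith
qed

lemma inter_thm:
  assumes g: "g \<in> carrier G" and ne: "tr g M \<noteq> M" and c2: "2 \<le> card (M \<inter> tr g M)"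
  shows False
proof -
  define B where "B = tr g M"
  have B: "adm B" "dl B = int K" "card B = card M" "B \<subseteq> carrier G" "finite B"
    using trM[OF g] B_def by auto
  have lt: "card (M \<inter> B) < card M"
  proof (rule ccontr)
    assume "\<not> card (M \<inter> B) < card M"
    hence "card (M \<inter> B) = card M" using card_mono[OF finM, of "M \<inter> B"] by auto
    hence "M \<inter> B = M" using card_subset_eq[OF finM, of "M \<inter> B"] by auto
    hence "M \<subseteq> B" by blast
    hence "M = B" using card_subset_eq[OF B(5)] B(3) by metis
    thus False using ne B_def by simp
  qed
  have aI: "adm (M \<inter> B)" using adm_subset[OF admM, of "M \<inter> B"] c2 B_def by auto
  have dI: "int K + 1 \<le> dl (M \<inter> B)" using small[OF aI lt] .
  have sm: "dl (M \<union> B) + dl (M \<inter> B) \<le> dl M + dl B"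
    using submod[OF finM B(5) MG B(4)] .
  have dU: "dl (M \<union> B) \<le> int K - 1" using sm dI dlM B(2) by linarith
  have nU: "\<not> adm (M \<union> B)" using K_le dU by force
  have c2U: "2 \<le> card (M \<union> B)" using cardM2 card_mono[of "M \<union> B" M] finM B(5) by auto
  have na: "finite (carrier G) \<and> card (carrier G) \<le> card (img (M \<union> B)) + 1"
    using notadm[OF _ _ c2U nU] MG B finM by auto
  have cU: "card (M \<union> B) + card (M \<inter> B) = card M + card B"
    using card_Un_Int[OF finM B(5)] by simp
  have "int (card (img (M \<union> B))) = int (card (M \<union> B)) + dl (M \<union> B)" using dl_card .
  moreover have "2 * card M + K \<le> card (carrier G)" using NDM na by blast
  moreover have c2B: "2 \<le> card (M \<inter> B)" using c2 B_def by simp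
  ultimately show False using conjunct2[OF na] cU B(3) dU by linarith
qed

end

locale ctx3 = ctx2 +
  assumes notsub: "\<not> subgroup M G"
begin

lemma exists_move: "\<exists>x\<in>M. tr x M \<noteq> M"
proof (rule ccontr)
  assume "\<not> (\<exists>x\<in>M. tr x M \<noteq> M)"
  hence T: "\<And>x. x \<in> M \<Longrightarrow> tr x M = M" by blast
  have "subgroup M G"
  proof (rule subgroupI)
    show "M \<subseteq> carrier G" using MG .
    show "M \<noteq> {}" using oneM by blast
    show "a \<otimes> b \<in> M" if "a \<in> M" "b \<in> M" for a b
      using T[OF that(2)] that(1) unfolding tr_def by blast
    show "inv a \<in> M" if a: "a \<in> M" for a
    proof -
      have "\<one> \<in> tr a M" using T[OF a] oneM by simp
      then obtain m where m: "m \<in> M" "\<one> = m \<otimes> a" unfolding tr_def by blast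
      have "inv a = m" using inv_equality[of m a] m a MG by auto
      thus ?thesis using m by simp
    qed
  qed
  thus False using notsub by blast
qed

lemma SID0: assumes g: "g \<in> carrier G" "g \<noteq> \<one>" shows "card (M \<inter> tr g M) \<le> 1"
proof (rule ccontr)
  assume c: "\<not> card (M \<inter> tr g M) \<le> 1"
  show False
  proof (cases "tr g M = M")
    case False
    thus False using inter_thm[OF g(1) False] c by linarith
  next
    case True
    obtain x where x: "x \<in> M" "tr x M \<noteq> M" using exists_move by blast
    have xG: "x \<in> carrier G" using x MG by blast
    have gM: "g \<in> M" using True oneM g unfolding tr_def by (metis image_eqI l_one)
    have 1: "x \<in> M \<inter> tr x M" using x oneM xG unfolding tr_def by (metis IntI image_eqI l_one)
    have 2: "x \<otimes> g \<in> M \<inter> tr x M"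
    proof
      show "x \<otimes> g \<in> M" using True x unfolding tr_def by blast
      show "x \<otimes> g \<in> tr x M" using gM xG g m_comm unfolding tr_def by (metis image_eqI)
    qed
    have ne: "x \<noteq> x \<otimes> g" using g xG by simp
    have "card {x, x \<otimes> g} \<le> card (M \<inter> tr x M)"
      by (rule card_mono) (use finM 1 2 in auto)
    hence "2 \<le> card (M \<inter> tr x M)" using ne by simp
    thus False using inter_thm[OF xG x(2)] by blast
  qed
qed

lemma card_le1: "finite A \<Longrightarrow> card A \<le> 1 \<Longrightarrow> u \<in> A \<Longrightarrow> v \<in> A \<Longrightarrow> u = v"
  by (metis One_nat_def card_le_Suc0_iff_eq)

lemma SID:
  assumes abcd: "a \<in> M" "b \<in> M" "c \<in> M" "d \<in> M" and e: "a \<otimes> b = c \<otimes> d"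
  shows "a = c \<or> a = d"
proof (rule ccontr)
  assume n: "\<not> (a = c \<or> a = d)"
  have G: "a \<in> carrier G" "b \<in> carrier G" "c \<in> carrier G" "d \<in> carrier G" using abcd MG by auto
  define g where "g = a \<otimes> inv d"
  have gG: "g \<in> carrier G" using G g_def by simp
  have g1: "g \<noteq> \<one>"
  proof
    assume "g = \<one>"
    hence "a \<otimes> inv d \<otimes> d = d" using G g_def by simp
    hence "a = d" using G by (simp add: m_assoc)
    thus False using n by simp
  qed
  have "a = d \<otimes> g" using G unfolding g_def using m_lcomm[of d a "inv d"] by simp
  hence aT: "a \<in> tr g M" using abcd unfolding tr_def by blast
  have "b \<otimes> g = (a \<otimes> b) \<otimes> inv d" using G unfolding g_def by (simp add: m_ac)
  also have "\<dots> = c" using e G by (simp add: m_assoc)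
  finally have cT: "c \<in> tr g M" using abcd unfolding tr_def by (metis image_eqI)
  have "a = c" using card_le1[OF _ SID0[OF gG g1]] aT cT abcd finM by blast
  thus False using n by simp
qed

end



context ctx3 begin

lemma lcan: "a \<in> carrier G \<Longrightarrow> b \<in> carrier G \<Longrightarrow> c \<in> carrier G \<Longrightarrow> a \<otimes> b = a \<otimes> c \<Longrightarrow> b = c"
  by (metis Units_eq Units_l_cancel)

lemma div_eq:
  assumes "a \<in> carrier G" "b \<in> carrier G" "c \<in> carrier G" "d \<in> carrier G"
  shows "(a \<otimes> inv b = c \<otimes> inv d) \<longleftrightarrow> (a \<otimes> d = c \<otimes> b)"
proof -
  have 1: "(a \<otimes> inv b) \<otimes> (b \<otimes> d) = a \<otimes> d" using assms
    by (metis inv_closed m_assoc m_comm m_closed r_inv r_one)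
  have 2: "(c \<otimes> inv d) \<otimes> (b \<otimes> d) = c \<otimes> b" using assms
    by (metis inv_closed m_assoc m_comm m_closed r_inv r_one)
  have "(a \<otimes> inv b = c \<otimes> inv d) \<longleftrightarrow> (a \<otimes> inv b) \<otimes> (b \<otimes> d) = (c \<otimes> inv d) \<otimes> (b \<otimes> d)"
    using assms by simp
  thus ?thesis using 1 2 by simp
qed

definition ti :: "'a \<Rightarrow> 'a set" where "ti g = (\<lambda>m. g \<otimes> inv m) ` M"

lemma ti_sub: "g \<in> carrier G \<Longrightarrow> ti g \<subseteq> carrier G"
  unfolding ti_def using MG by auto

lemma inj_ginv: "g \<in> carrier G \<Longrightarrow> inj_on (\<lambda>m. g \<otimes> inv m) (carrier G)"
proof (rule inj_onI)
  fix a b assume g: "g \<in> carrier G" and ab: "a \<in> carrier G" "b \<in> carrier G" "g \<otimes> inv a = g \<otimes> inv b"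
  hence "inv a = inv b" using lcan[of g "inv a" "inv b"] by simp
  thus "a = b" using ab by (metis inv_inv)
qed

lemma ti_card: "g \<in> carrier G \<Longrightarrow> card (ti g) = card M"
  unfolding ti_def by (rule card_image, rule inj_on_subset[OF inj_ginv]) (use MG in auto)

lemma TI:
  assumes g: "g \<in> carrier G" and h: "h \<in> carrier G" and gh: "g \<noteq> h"
    and u: "u \<in> ti g" "u \<in> ti h" and v: "v \<in> ti g" "v \<in> ti h"
  shows "u = v"
proof -
  obtain m1 m2 m3 m4 where m: "m1 \<in> M" "m2 \<in> M" "m3 \<in> M" "m4 \<in> M"
    and e: "u = g \<otimes> inv m1" "u = h \<otimes> inv m2" "v = g \<otimes> inv m3" "v = h \<otimes> inv m4"
    using u v unfolding ti_def by blast
  have mG: "m1 \<in> carrier G" "m2 \<in> carrier G" "m3 \<in> carrier G" "m4 \<in> carrier G" using m MG by auto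
  have e1: "g \<otimes> m2 = h \<otimes> m1" using e(1,2) div_eq[of g m1 h m2] g h mG by simp
  have e2: "g \<otimes> m4 = h \<otimes> m3" using e(3,4) div_eq[of g m3 h m4] g h mG by simp
  have "(g \<otimes> h) \<otimes> (m2 \<otimes> m3) = (g \<otimes> m2) \<otimes> (h \<otimes> m3)" using g h mG by (simp add: m_ac)
  also have "\<dots> = (h \<otimes> m1) \<otimes> (g \<otimes> m4)" using e1 e2 by simp
  also have "\<dots> = (g \<otimes> h) \<otimes> (m1 \<otimes> m4)" using g h mG by (simp add: m_ac)
  finally have "m2 \<otimes> m3 = m1 \<otimes> m4" using lcan g h mG by (meson m_closed)
  hence "m1 = m2 \<or> m1 = m3" using SID[OF m(1,4,2,3)] by simp
  thus ?thesis
  proof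
    assume "m1 = m2"
    hence "g = h" using e1 g h mG by (metis m_comm right_cancel)
    thus ?thesis using gh by simp
  qed (use e in simp)
qed

lemma two_ti:
  assumes g: "g \<in> carrier G" and h: "h \<in> carrier G" and gh: "g \<noteq> h"
  shows "2 * card M - 1 \<le> card (ti g \<union> ti h)"
proof -
  have f: "finite (ti g)" "finite (ti h)" unfolding ti_def using finM by auto
  have "card (ti g \<inter> ti h) \<le> 1"
    using card_le_Suc0_iff_eq[of "ti g \<inter> ti h"] TI[OF g h gh] f by auto
  moreover have "card (ti g \<union> ti h) + card (ti g \<inter> ti h) = card (ti g) + card (ti h)"
    using card_Un_Int[OF f] by simp
  ultimately show ?thesis using ti_card g h by simp
qed

abbreviation "Cc \<equiv> carrier G - img M"

lemma img_M_sub: "img M \<subseteq> carrier G" using img_sub MG by blast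

lemma N_eq: "finite (carrier G) \<Longrightarrow> int (card (carrier G)) = int (card M) + int K + int (card Cc)"
proof -
  assume f: "finite (carrier G)"
  have "card (carrier G) = card (img M) + card Cc"
    using card_Diff_subset[OF img_fin[OF finM] img_M_sub] card_mono[OF f img_M_sub] by linarith
  thus ?thesis using img_M by linarith
qed

lemma P2:
  assumes fin: "finite (carrier G)" and g: "g \<in> carrier G" and c2: "2 \<le> card (Cc \<inter> ti g)"
  shows "ti g \<subseteq> Cc"
proof (rule ccontr)
  assume nsub: "\<not> ti g \<subseteq> Cc"
  define V where "V = (\<lambda>c. g \<otimes> inv c) ` Cc"
  have CcG: "Cc \<subseteq> carrier G" by blast
  have finCc: "finite Cc" using fin by blast
  have VG: "V \<subseteq> carrier G" unfolding V_def using g by auto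
  have finV: "finite V" unfolding V_def using finCc by blast
  have cV: "card V = card Cc" unfolding V_def
    by (rule card_image, rule inj_on_subset[OF inj_ginv[OF g]]) blast
  have key: "img V \<inter> ti g = {}"
  proof (rule ccontr)
    assume "img V \<inter> ti g \<noteq> {}"
    then obtain w where w: "w \<in> img V" "w \<in> ti g" by blast
    obtain c s where cs: "c \<in> Cc" "s \<in> S" "w = (g \<otimes> inv c) \<otimes> s" using w(1) unfolding img_iff V_def by blast
    obtain m where m: "m \<in> M" "w = g \<otimes> inv m" using w(2) unfolding ti_def by blast
    have G: "c \<in> carrier G" "s \<in> carrier G" "m \<in> carrier G" using cs m MG SG by auto
    have "(g \<otimes> s) \<otimes> inv c = g \<otimes> inv m" using cs m G g by (simp add: m_ac)
    hence "(g \<otimes> s) \<otimes> m = g \<otimes> c" using div_eq[of "g \<otimes> s" c g m] G g by simp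
    hence "g \<otimes> (s \<otimes> m) = g \<otimes> c" using G g by (simp add: m_assoc)
    hence "s \<otimes> m = c" using lcan G g by (meson m_closed)
    hence "c = m \<otimes> s" using G m_comm by simp
    hence "c \<in> img M" using m cs unfolding img_iff by blast
    thus False using cs by blast
  qed
  have tiG: "ti g \<subseteq> carrier G" using ti_sub g .
  have cimgV: "card (img V) + card M \<le> card (carrier G)"
  proof -
    have "img V \<union> ti g \<subseteq> carrier G" using img_sub[OF VG] tiG by blast
    hence "card (img V \<union> ti g) \<le> card (carrier G)" using card_mono fin by blast
    moreover have "card (img V \<union> ti g) = card (img V) + card (ti g)"
      using card_Un_disjoint[OF img_fin[OF finV] _ key] finM unfolding ti_def by blast
    ultimately show ?thesis using ti_card g by simp
  qed
  have dV: "dl V \<le> int K" using cimgV cV N_eq[OF fin] unfolding dl_def by linarith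
  have MV: "(\<lambda>m. g \<otimes> inv m) ` (M \<inter> V) = Cc \<inter> ti g"
  proof
    show "(\<lambda>m. g \<otimes> inv m) ` (M \<inter> V) \<subseteq> Cc \<inter> ti g"
    proof
      fix w assume "w \<in> (\<lambda>m. g \<otimes> inv m) ` (M \<inter> V)"
      then obtain m c where mc: "m \<in> M" "c \<in> Cc" "m = g \<otimes> inv c" "w = g \<otimes> inv m"
        unfolding V_def by blast
      have G: "c \<in> carrier G" "m \<in> carrier G" using mc MG by auto
      have "m \<otimes> inv \<one> = g \<otimes> inv c" using mc G by simp
      hence "m \<otimes> c = g \<otimes> \<one>" using div_eq[of m \<one> g c] G g by simp
      hence "c \<otimes> inv \<one> = g \<otimes> inv m" using div_eq[of c \<one> g m] G g by (simp add: m_comm)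
      hence "w = c" using mc G by simp
      thus "w \<in> Cc \<inter> ti g" using mc unfolding ti_def by blast
    qed
    show "Cc \<inter> ti g \<subseteq> (\<lambda>m. g \<otimes> inv m) ` (M \<inter> V)"
    proof
      fix c assume c: "c \<in> Cc \<inter> ti g"
      then obtain m where m: "m \<in> M" "c = g \<otimes> inv m" unfolding ti_def by blast
      have G: "c \<in> carrier G" "m \<in> carrier G" using c m MG by auto
      have "c \<otimes> inv \<one> = g \<otimes> inv m" using m G by simp
      hence "c \<otimes> m = g \<otimes> \<one>" using div_eq[of c \<one> g m] G g by simp
      hence "m \<otimes> inv \<one> = g \<otimes> inv c" using div_eq[of m \<one> g c] G g by (simp add: m_comm)
      hence "m \<in> V" using c G unfolding V_def by auto
      thus "c \<in> (\<lambda>m. g \<otimes> inv m) ` (M \<inter> V)" using m by blast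
    qed
  qed
  have cMV: "card (M \<inter> V) = card (Cc \<inter> ti g)"
  proof -
    have s: "M \<inter> V \<subseteq> carrier G" using MG by blast
    show ?thesis using card_image[OF inj_on_subset[OF inj_ginv[OF g] s]] MV by simp
  qed
  have lt: "card (M \<inter> V) < card M"
  proof -
    obtain m where m: "m \<in> M" "g \<otimes> inv m \<notin> Cc" using nsub unfolding ti_def by blast
    have "m \<notin> V"
    proof
      assume "m \<in> V"
      hence "g \<otimes> inv m \<in> (\<lambda>m. g \<otimes> inv m) ` (M \<inter> V)" using m by blast
      thus False using MV m by blast
    qed
    hence "M \<inter> V \<subset> M" using m by blast
    thus ?thesis using psubset_card_mono finM by blast
  qed
  have aI: "adm (M \<inter> V)" using adm_subset[OF admM, of "M \<inter> V"] cMV c2 by auto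
  have dI: "int K + 1 \<le> dl (M \<inter> V)" using small[OF aI lt] .
  have sm: "dl (M \<union> V) + dl (M \<inter> V) \<le> dl M + dl V" using submod[OF finM finV MG VG] .
  have dU: "dl (M \<union> V) < int K" using sm dI dV dlM by linarith
  have nU: "\<not> adm (M \<union> V)" using K_le dU by force
  have c2U: "2 \<le> card (M \<union> V)" using cardM2 card_mono[of "M \<union> V" M] finM finV by auto
  have na: "card (carrier G) \<le> card (img (M \<union> V)) + 1"
    using notadm[OF _ _ c2U nU] MG VG finM finV by auto
  have sub: "img (M \<union> V) \<subseteq> carrier G - (Cc \<inter> ti g)"
    using img_Un img_sub[OF VG] img_M_sub key by blast
  have "card (img (M \<union> V)) \<le> card (carrier G - (Cc \<inter> ti g))"
    using card_mono[OF _ sub] fin by blast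
  also have "\<dots> = card (carrier G) - card (Cc \<inter> ti g)"
    by (rule card_Diff_subset) (use finCc in auto)
  finally have "card (img (M \<union> V)) \<le> card (carrier G) - card (Cc \<inter> ti g)" .
  moreover have "card (Cc \<inter> ti g) \<le> card (carrier G)" using card_mono[OF fin, of "Cc \<inter> ti g"] by blast
  ultimately show False using na c2 by linarith
qed

end



context ctx3 begin

lemma Cc2: "finite (carrier G) \<Longrightarrow> 2 \<le> card Cc"
proof -
  assume f: "finite (carrier G)"
  have "card_ge Cc 2" using admM unfolding adm_iff by blast
  thus ?thesis using card_ge_fin f by blast
qed

lemma mk_ti:
  assumes fin: "finite (carrier G)" and c: "c \<in> Cc" "c' \<in> Cc" and m: "m \<in> M" "m' \<in> M"
    and e: "c \<otimes> inv m = c' \<otimes> inv m'" and ne: "c \<noteq> c'"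
  shows "\<exists>h\<in>carrier G. ti h \<subseteq> Cc \<and> c \<in> ti h \<and> c' \<in> ti h"
proof -
  have G: "c \<in> carrier G" "c' \<in> carrier G" "m \<in> carrier G" "m' \<in> carrier G" using c m MG by auto
  define h where "h = c \<otimes> m'"
  have hG: "h \<in> carrier G" using G h_def by simp
  have 1: "c = h \<otimes> inv m'" using G unfolding h_def by (simp add: m_assoc)
  have "c \<otimes> m' = c' \<otimes> m" using e div_eq[of c m c' m'] G by simp
  hence "h \<otimes> inv m = c' \<otimes> m \<otimes> inv m" unfolding h_def by simp
  hence 2: "c' = h \<otimes> inv m" using G by (simp add: m_assoc)
  have c1: "c \<in> ti h" using 1 m unfolding ti_def by blast
  have c2: "c' \<in> ti h" using 2 m unfolding ti_def by blast
  have "card {c, c'} \<le> card (Cc \<inter> ti h)"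
    by (rule card_mono) (use fin c c1 c2 in auto)
  hence "2 \<le> card (Cc \<inter> ti h)" using ne by simp
  hence "ti h \<subseteq> Cc" using P2[OF fin hG] by blast
  thus ?thesis using hG c1 c2 by blast
qed

lemma same_c: "c \<in> carrier G \<Longrightarrow> m \<in> M \<Longrightarrow> m' \<in> M \<Longrightarrow> c \<otimes> inv m = c \<otimes> inv m' \<Longrightarrow> m = m'"
proof -
  assume a: "c \<in> carrier G" "m \<in> M" "m' \<in> M" "c \<otimes> inv m = c \<otimes> inv m'"
  have "m \<in> carrier G" "m' \<in> carrier G" using a MG by auto
  thus ?thesis using inj_onD[OF inj_ginv[OF a(1)] a(4)] by blast
qed

definition fd :: "'a \<times> 'a \<Rightarrow> 'a" where "fd p = fst p \<otimes> inv (snd p)"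

lemma fd_mem: "x \<in> fd ` (A \<times> B) \<longleftrightarrow> (\<exists>a\<in>A. \<exists>b\<in>B. x = a \<otimes> inv b)"
  unfolding fd_def by force

lemma PA:
  assumes fin: "finite (carrier G)" and a3: "3 \<le> card M" and cC: "card Cc + 2 \<le> 2 * card M"
    and W: "finite W" "3 * card M \<le> card W + 3" "W \<subseteq> carrier G"
       "\<And>w. w \<in> W \<Longrightarrow> \<exists>m1\<in>M. \<exists>m2\<in>M. w = m1 \<otimes> m2"
  shows "card M = 3 \<and> K = card S \<and> card (carrier G) = card S + 6"
proof -
  define f where "f = fd"
  define D where "D = f ` (Cc \<times> M)"
  have finCc: "finite Cc" using fin by blast
  have DS: "D \<inter> S = {}"
  proof (rule ccontr)
    assume "D \<inter> S \<noteq> {}"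
    then obtain x where "x \<in> D" "x \<in> S" by blast
    then obtain c m where cm: "c \<in> Cc" "m \<in> M" "c \<otimes> inv m \<in> S" unfolding D_def f_def fd_mem by blast
    have G: "c \<in> carrier G" "m \<in> carrier G" using cm MG by auto
    have "c = m \<otimes> (c \<otimes> inv m)" using G by (simp add: m_lcomm)
    hence "c \<in> img M" using cm unfolding img_iff by blast
    thus False using cm by blast
  qed
  have DG: "D \<subseteq> carrier G" unfolding D_def f_def fd_def using MG by auto
  have finD: "finite D" unfolding D_def using finCc finM by blast
  have cD: "card D + card S \<le> card (carrier G)"
  proof -
    have "card (D \<union> S) = card D + card S" using card_Un_disjoint[OF finD finS DS] .
    moreover have "card (D \<union> S) \<le> card (carrier G)" using card_mono[OF fin] DG SG by blast
    ultimately show ?thesis by simp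
  qed
  have NE: "int (card (carrier G)) = int (card M) + int K + int (card Cc)" using N_eq[OF fin] .
  have c2: "2 \<le> card Cc" using Cc2[OF fin] .
  show ?thesis
  proof (cases "\<exists>g\<in>carrier G. ti g \<subseteq> Cc")
    case False
    have inj: "inj_on f (Cc \<times> M)"
    proof (rule inj_onI)
      fix p q assume p: "p \<in> Cc \<times> M" and q: "q \<in> Cc \<times> M" and e: "f p = f q"
      obtain c m where pc: "p = (c, m)" "c \<in> Cc" "m \<in> M" using p by blast
      obtain c' m' where qc: "q = (c', m')" "c' \<in> Cc" "m' \<in> M" using q by blast
      have e': "c \<otimes> inv m = c' \<otimes> inv m'" using e pc qc unfolding f_def fd_def by simp
      show "p = q"
      proof (cases "c = c'")
        case True
        thus ?thesis using same_c[of c m m'] e' pc qc by auto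
      next
        case ne: False
        thus ?thesis using mk_ti[OF fin pc(2) qc(2) pc(3) qc(3) e' ne] False by blast
      qed
    qed
    have "card D = card Cc * card M" unfolding D_def using card_image[OF inj] card_cartesian_product by simp
    moreover have "2 * card M \<le> card Cc * card M" using c2 by simp
    moreover have "card Cc * 3 \<le> card Cc * card M" using a3 by simp
    ultimately have "card Cc * card M + card S \<le> card (carrier G)" "2 * card M \<le> card Cc * card M"
      "card Cc * 3 \<le> card Cc * card M" using cD by auto
    hence False using NE kS c2 by linarith
    thus ?thesis ..
  next
    case True
    then obtain g where g: "g \<in> carrier G" "ti g \<subseteq> Cc" by blast
    define B where "B = ti g"
    define K' where "K' = Cc - B"
    have finB: "finite B" unfolding B_def ti_def using finM by blast
    have cCc: "card Cc = card M + card K'"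
      using card_Diff_subset[OF finB] g ti_card[OF g(1)] card_mono[OF finCc, of B] unfolding K'_def B_def
      by simp
    have bad2: False if c: "c \<in> K'" "c' \<in> Cc" "m \<in> M" "m' \<in> M" "c \<otimes> inv m = c' \<otimes> inv m'" "c \<noteq> c'"
      for c c' m m'
    proof -
      have cC0: "c \<in> Cc" using c K'_def by blast
      obtain h where h: "h \<in> carrier G" "ti h \<subseteq> Cc" "c \<in> ti h" using mk_ti[OF fin cC0 c(2-6)] by blast
      have "h \<noteq> g" using h c unfolding K'_def B_def by blast
      hence "2 * card M - 1 \<le> card (ti g \<union> ti h)" using two_ti[OF g(1) h(1)] by blast
      moreover have "card (ti g \<union> ti h) \<le> card Cc" using card_mono[OF finCc] g h by blast
      ultimately show False using cC a3 by linarith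
    qed
    define D1 where "D1 = (\<lambda>w. g \<otimes> inv w) ` W"
    define D2 where "D2 = f ` (K' \<times> M)"
    have D1D: "D1 \<subseteq> D"
    proof
      fix x assume "x \<in> D1"
      then obtain w where w: "w \<in> W" "x = g \<otimes> inv w" unfolding D1_def by blast
      obtain m1 m2 where m: "m1 \<in> M" "m2 \<in> M" "w = m1 \<otimes> m2" using W(4)[OF w(1)] by blast
      have G: "m1 \<in> carrier G" "m2 \<in> carrier G" using m MG by auto
      have "x = (g \<otimes> inv m1) \<otimes> inv m2" using w m G g by (simp add: inv_mult_group m_ac)
      moreover have "g \<otimes> inv m1 \<in> Cc" using g m unfolding ti_def by blast
      ultimately show "x \<in> D" using m unfolding D_def f_def fd_mem by blast
    qed
    have D2D: "D2 \<subseteq> D" unfolding D2_def D_def K'_def by blast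
    have cD1: "card D1 = card W" unfolding D1_def
      by (rule card_image, rule inj_on_subset[OF inj_ginv[OF g(1)] W(3)])
    have inj2: "inj_on f (K' \<times> M)"
    proof (rule inj_onI)
      fix p q assume p: "p \<in> K' \<times> M" and q: "q \<in> K' \<times> M" and e: "f p = f q"
      obtain c m where pc: "p = (c, m)" "c \<in> K'" "m \<in> M" using p by blast
      obtain c' m' where qc: "q = (c', m')" "c' \<in> K'" "m' \<in> M" using q by blast
      have e': "c \<otimes> inv m = c' \<otimes> inv m'" using e pc qc unfolding f_def fd_def by simp
      have cG: "c \<in> carrier G" using pc K'_def by blast
      show "p = q"
      proof (cases "c = c'")
        case True
        thus ?thesis using same_c[OF cG pc(3) qc(3)] e' pc qc by auto
      next
        case ne: False
        have "c' \<in> Cc" using qc K'_def by blast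
        thus ?thesis using bad2[OF pc(2) _ pc(3) qc(3) e' ne] by blast
      qed
    qed
    have finK': "finite K'" using finCc K'_def by blast
    have cD2: "card D2 = card K' * card M" unfolding D2_def using card_image[OF inj2] card_cartesian_product by simp
    have disj: "D1 \<inter> D2 = {}"
    proof (rule ccontr)
      assume "D1 \<inter> D2 \<noteq> {}"
      then obtain x where x: "x \<in> D1" "x \<in> D2" by blast
      obtain w where w: "w \<in> W" "x = g \<otimes> inv w" using x(1) unfolding D1_def by blast
      obtain m1 m2 where m: "m1 \<in> M" "m2 \<in> M" "w = m1 \<otimes> m2" using W(4)[OF w(1)] by blast
      obtain c m where cm: "c \<in> K'" "m \<in> M" "x = c \<otimes> inv m" using x(2) unfolding D2_def f_def fd_mem by blast
      have G: "m1 \<in> carrier G" "m2 \<in> carrier G" using m MG by auto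
      have xe: "x = (g \<otimes> inv m1) \<otimes> inv m2" using w m G g by (simp add: inv_mult_group m_ac)
      have bB: "g \<otimes> inv m1 \<in> B" using m unfolding B_def ti_def by blast
      have bC: "g \<otimes> inv m1 \<in> Cc" using bB g B_def by blast
      have "c \<noteq> g \<otimes> inv m1" using cm bB K'_def by blast
      thus False using bad2[OF cm(1) bC cm(2) m(2)] cm xe by simp
    qed
    have finD1: "finite D1" unfolding D1_def using W by blast
    have finD2: "finite D2" unfolding D2_def using finK' finM by blast
    have "card (D1 \<union> D2) = card W + card K' * card M"
      using card_Un_disjoint[OF finD1 finD2 disj] cD1 cD2 by simp
    moreover have "card (D1 \<union> D2) \<le> card D" using card_mono[OF finD] D1D D2D by blast
    moreover have "card K' * 3 \<le> card K' * card M" using a3 by simp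
    ultimately show ?thesis using cD NE kS cCc W(2) a3 by linarith
  qed
qed

end



context ctx3 begin

lemma trM1: "tr \<one> M = M"
  unfolding tr_def using MG by (force simp: image_iff)

lemma TR:
  assumes a: "a \<in> M" and c: "c \<in> M" and ac: "a \<noteq> c" and w: "w \<in> tr a M" "w \<in> tr c M"
  shows "w = a \<otimes> c"
proof -
  obtain p q where pq: "p \<in> M" "q \<in> M" "w = p \<otimes> a" "w = q \<otimes> c" using w unfolding tr_def by blast
  have G: "p \<in> carrier G" "q \<in> carrier G" "a \<in> carrier G" "c \<in> carrier G" using pq a c MG by auto
  have "p = q \<or> p = c" using SID[OF pq(1) a pq(2) c] pq by simp
  thus ?thesis
  proof
    assume "p = q"
    hence "a = c" using pq G lcan by metis
    thus ?thesis using ac by simp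
  qed (use pq G m_comm in simp)
qed

lemma inter_tr_le1:
  assumes a: "a \<in> M" and c: "c \<in> M" and ac: "a \<noteq> c"
  shows "tr a M \<inter> tr c M \<subseteq> {a \<otimes> c}"
  using TR[OF a c ac] by blast

lemma img_single: "a \<in> carrier G \<Longrightarrow> img {a} = (\<lambda>s. a \<otimes> s) ` S"
  unfolding cay_image_def by auto

lemma card_img_single: "a \<in> carrier G \<Longrightarrow> card (img {a}) = card S"
proof -
  assume a: "a \<in> carrier G"
  have "inj_on (\<lambda>s. a \<otimes> s) S"
    by (rule inj_onI) (use a SG lcan in blast)
  thus ?thesis using img_single[OF a] card_image by simp
qed

lemma dl_single: "a \<in> carrier G \<Longrightarrow> dl {a} = int (card S) - 1"
  unfolding dl_def using card_img_single by simp

lemma M_inter: assumes x: "x \<in> M" "x \<noteq> \<one>" shows "M \<inter> tr x M \<subseteq> {x}"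
proof -
  have xG: "x \<in> carrier G" using x MG by auto
  have "tr \<one> M \<inter> tr x M \<subseteq> {\<one> \<otimes> x}" using inter_tr_le1[OF oneM x(1)] x by metis
  thus ?thesis using trM1 xG by simp
qed

definition "UU x = M \<union> tr x M"
definition "XX x y = UU x \<union> tr y M"

lemma cardM_int: "card (M \<inter> tr x M) = 1" if x: "x \<in> M" "x \<noteq> \<one>" for x
proof -
  have "M \<inter> tr x M \<subseteq> {x}" using M_inter[OF x] .
  moreover have "x \<in> M \<inter> tr x M" using x oneM MG unfolding tr_def by (force simp: image_iff)
  ultimately have "M \<inter> tr x M = {x}" by blast
  thus ?thesis by simp
qed

lemma UU_facts:
  assumes x: "x \<in> M" "x \<noteq> \<one>"
  shows "finite (UU x)" "UU x \<subseteq> carrier G" "card (UU x) + 1 = 2 * card M" "dl (UU x) \<le> int K + 1"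
proof -
  have xG: "x \<in> carrier G" using x MG by auto
  have T: "adm (tr x M)" "dl (tr x M) = int K" "card (tr x M) = card M" "tr x M \<subseteq> carrier G" "finite (tr x M)"
    using trM[OF xG] by auto
  show "finite (UU x)" unfolding UU_def using finM T by simp
  show "UU x \<subseteq> carrier G" unfolding UU_def using MG T by simp
  have "card (UU x) + card (M \<inter> tr x M) = card M + card (tr x M)"
    unfolding UU_def using card_Un_Int[OF finM T(5)] by simp
  thus "card (UU x) + 1 = 2 * card M" using cardM_int[OF x] T by simp
  have I: "M \<inter> tr x M = {x}"
  proof -
    have "M \<inter> tr x M \<subseteq> {x}" using M_inter[OF x] .
    moreover have "x \<in> M \<inter> tr x M" using x oneM MG unfolding tr_def by (force simp: image_iff)
    ultimately show ?thesis by blast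
  qed
  have "dl (UU x) + dl (M \<inter> tr x M) \<le> dl M + dl (tr x M)"
    unfolding UU_def using submod[OF finM T(5) MG T(4)] .
  thus "dl (UU x) \<le> int K + 1" using I dl_single[OF xG] dlM T kS by simp
qed

lemma XX_facts:
  assumes x: "x \<in> M" "x \<noteq> \<one>" and y: "y \<in> M" "y \<noteq> \<one>" and xy: "x \<noteq> y" and a3: "3 \<le> card M"
  shows "finite (XX x y)" "XX x y \<subseteq> carrier G" "card (XX x y) + 3 = 3 * card M"
    "dl (XX x y) \<le> dl (UU x) - 1"
    "\<And>w. w \<in> XX x y \<Longrightarrow> \<exists>m1\<in>M. \<exists>m2\<in>M. w = m1 \<otimes> m2"
proof -
  have xG: "x \<in> carrier G" and yG: "y \<in> carrier G" using x y MG by auto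
  have T: "adm (tr y M)" "dl (tr y M) = int K" "card (tr y M) = card M" "tr y M \<subseteq> carrier G" "finite (tr y M)"
    using trM[OF yG] by auto
  note U = UU_facts[OF x]
  show "finite (XX x y)" unfolding XX_def using U T by simp
  show "XX x y \<subseteq> carrier G" unfolding XX_def using U T by simp
  have I: "UU x \<inter> tr y M = {y, x \<otimes> y}"
  proof
    show "UU x \<inter> tr y M \<subseteq> {y, x \<otimes> y}"
      using M_inter[OF y] inter_tr_le1[OF x(1) y(1) xy] unfolding UU_def by auto
    have "y \<in> M" "y \<in> tr y M" using y oneM MG unfolding tr_def by (force simp: image_iff)+
    moreover have "x \<otimes> y \<in> tr x M" "x \<otimes> y \<in> tr y M" using x y xG yG m_comm unfolding tr_def by (force simp: image_iff)+
    ultimately show "{y, x \<otimes> y} \<subseteq> UU x \<inter> tr y M" unfolding UU_def by blast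
  qed
  have ne: "y \<noteq> x \<otimes> y" using x xG yG by simp
  have cI: "card (UU x \<inter> tr y M) = 2" using I ne by simp
  have aI: "adm (UU x \<inter> tr y M)" using adm_subset[OF T(1), of "UU x \<inter> tr y M"] cI by auto
  have dI: "int K + 1 \<le> dl (UU x \<inter> tr y M)" using small[OF aI] cI a3 by simp
  have "dl (XX x y) + dl (UU x \<inter> tr y M) \<le> dl (UU x) + dl (tr y M)"
    unfolding XX_def using submod[OF U(1) T(5) U(2) T(4)] .
  thus "dl (XX x y) \<le> dl (UU x) - 1" using dI T by simp
  have "card (XX x y) + card (UU x \<inter> tr y M) = card (UU x) + card (tr y M)"
    unfolding XX_def using card_Un_Int[OF U(1) T(5)] by simp
  thus "card (XX x y) + 3 = 3 * card M" using cI U(3) T(3) by simp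
  show "\<exists>m1\<in>M. \<exists>m2\<in>M. w = m1 \<otimes> m2" if "w \<in> XX x y" for w
  proof -
    have "w \<in> M \<or> w \<in> tr x M \<or> w \<in> tr y M" using that unfolding XX_def UU_def by blast
    thus ?thesis
    proof (elim disjE)
      assume "w \<in> M" thus ?thesis using oneM MG by (metis r_one subsetD)
    next
      assume "w \<in> tr x M" thus ?thesis using x unfolding tr_def by blast
    next
      assume "w \<in> tr y M" thus ?thesis using y unfolding tr_def by blast
    qed
  qed
qed

end



context ctx3 begin

lemma conclude:
  assumes "Q \<subseteq> carrier G" "finite Q" "2 \<le> card Q" "dl Q < int K"
  shows "finite (carrier G) \<and> int (card (carrier G)) \<le> int (card Q) + dl Q + 1"
proof -
  have "\<not> adm Q" using K_le assms(4) by force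
  hence "finite (carrier G) \<and> card (carrier G) \<le> card (img Q) + 1" using notadm assms by blast
  thus ?thesis using dl_card[of Q] by linarith
qed

lemma img_pair: "img {a, b} = img {a} \<union> img {b}"
proof -
  have "{a, b} = {a} \<union> {b}" by auto
  thus ?thesis using img_Un by metis
qed

lemma img_one: "img {\<one>} = S"
  using img_single[of \<one>] SG by (force simp: image_iff)

lemma R3:
  assumes a3: "card M = 3" and m: "m \<in> M"
  shows "img (M - {m}) = img M"
proof -
  have c2: "card (M - {m}) = 2" using a3 m finM by simp
  have aM: "adm (M - {m})" using adm_subset[OF admM, of "M - {m}"] c2 by auto
  have "int K + 1 \<le> dl (M - {m})" using small[OF aM] c2 a3 by simp
  hence "card (img M) \<le> card (img (M - {m}))" using dl_card[of "M - {m}"] c2 img_M a3 by linarith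
  moreover have "img (M - {m}) \<subseteq> img M" using img_mono by blast
  ultimately show ?thesis using card_subset_eq img_fin finM by (metis card_seteq)
qed

lemma y3:
  assumes a3: "card M = 3" and x: "x \<in> M" "x \<noteq> \<one>" and y: "y \<in> M" "y \<noteq> \<one>" and xy: "x \<noteq> y"
    and dU: "int K + 1 \<le> dl (UU x)"
  shows "y \<otimes> y \<otimes> y = \<one>"
proof -
  have xG: "x \<in> carrier G" and yG: "y \<in> carrier G" using x y MG by auto
  have Meq: "M = {\<one>, x, y}"
  proof -
    have s: "{\<one>, x, y} \<subseteq> M" using x y oneM by blast
    have "card {\<one>, x, y} = 3" using x y xy by simp
    thus ?thesis using card_subset_eq[OF finM s] a3 by simp
  qed
  define T where "T = img M"
  define xS where "xS = img {x}"
  define yS where "yS = img {y}"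
  have TG: "T \<subseteq> carrier G" unfolding T_def using img_M_sub .
  have finT: "finite T" unfolding T_def using img_fin finM by blast
  have cT: "card T = 3 + K" unfolding T_def using img_M a3 by linarith
  have cxS: "card xS = card S" unfolding xS_def using card_img_single xG by blast
  have finxS: "finite xS" unfolding xS_def using img_fin by blast
  define I where "I = T \<inter> tr x T"
  have finI: "finite I" unfolding I_def using finT by blast
  have imgU: "img (UU x) = T \<union> tr x T" unfolding UU_def T_def using img_Un img_tr[OF xG MG] by simp
  have ctxT: "card (tr x T) = card T" using tr_card[OF xG TG] .
  have "card (T \<union> tr x T) + card I = card T + card (tr x T)"
    unfolding I_def using card_Un_Int[OF finT tr_fin[OF finT]] by simp
  moreover have "card (img (UU x)) = card (T \<union> tr x T)" using imgU by simp
  ultimately have "card I \<le> K" using dU ctxT cT UU_facts(3)[OF x] a3 unfolding dl_def by linarith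
  moreover have xSI: "xS \<subseteq> I"
  proof
    fix w assume "w \<in> xS"
    then obtain s where s: "s \<in> S" "w = x \<otimes> s" unfolding xS_def img_single[OF xG] by blast
    have sG: "s \<in> carrier G" using s SG by blast
    have "w \<in> T" unfolding T_def img_iff using s x by blast
    moreover have "s \<in> T" unfolding T_def img_iff using s oneM sG by force
    hence "w \<in> tr x T" unfolding tr_def using s xG sG m_comm by (metis image_eqI)
    ultimately show "w \<in> I" unfolding I_def by blast
  qed
  ultimately have cSK: "card S = K" using card_mono[OF finI xSI] cxS kS by linarith
  have IxS: "I = xS" using card_subset_eq[OF finI xSI] cxS cSK \<open>card I \<le> K\<close> card_mono[OF finI xSI] by simp
  have R1: "T = S \<union> xS"
  proof -
    have "M - {y} = {\<one>, x}" using Meq xy y by auto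
    thus ?thesis using R3[OF a3 y(1)] img_pair img_one unfolding T_def xS_def by simp
  qed
  have R2: "T = xS \<union> yS"
  proof -
    have "M - {\<one>} = {x, y}" using Meq x y by auto
    thus ?thesis using R3[OF a3 oneM] img_pair unfolding T_def xS_def yS_def by simp
  qed
  define P where "P = S - xS"
  have finP: "finite P" unfolding P_def using finS by blast
  have cP: "card P = 3"
  proof -
    have "S \<union> xS = P \<union> xS" unfolding P_def by blast
    moreover have "card (P \<union> xS) = card P + card xS"
      by (rule card_Un_disjoint) (use finP finxS P_def in auto)
    ultimately show ?thesis using R1 cT cSK cxS by simp
  qed
  have step: "\<exists>q\<in>P. q \<otimes> y = p" if p: "p \<in> P" for p
  proof -
    have pS: "p \<in> S" and pn: "p \<notin> xS" using p P_def by auto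
    have "p \<in> T" unfolding T_def img_iff using pS oneM SG by force
    hence "p \<in> yS" using R2 pn by blast
    then obtain q where q: "q \<in> S" "p = y \<otimes> q" unfolding yS_def img_single[OF yG] by blast
    have qG: "q \<in> carrier G" using q SG by blast
    have "q \<notin> xS"
    proof
      assume "q \<in> xS"
      then obtain s where s: "s \<in> S" "q = x \<otimes> s" unfolding xS_def img_single[OF xG] by blast
      have sG: "s \<in> carrier G" using s SG by blast
      have "y \<otimes> s \<in> T" unfolding T_def img_iff using s y by blast
      moreover have "p = (y \<otimes> s) \<otimes> x" using q s xG yG sG by (simp add: m_ac)
      ultimately have "p \<in> tr x T" unfolding tr_def by blast
      moreover have "p \<in> T" unfolding T_def img_iff using pS oneM SG by force
      ultimately have "p \<in> I" unfolding I_def by blast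
      thus False using IxS pn by blast
    qed
    hence "q \<in> P" using q P_def by blast
    moreover have "q \<otimes> y = p" using q qG yG m_comm by simp
    ultimately show ?thesis by blast
  qed
  have PG: "P \<subseteq> carrier G" unfolding P_def using SG by blast
  obtain p0 where p0: "p0 \<in> P" using cP by (metis card.empty ex_in_conv zero_neq_numeral)
  obtain p1 where p1: "p1 \<in> P" "p1 \<otimes> y = p0" using step[OF p0] by blast
  obtain p2 where p2: "p2 \<in> P" "p2 \<otimes> y = p1" using step[OF p1(1)] by blast
  obtain p3 where p3: "p3 \<in> P" "p3 \<otimes> y = p2" using step[OF p2(1)] by blast
  have G: "p0 \<in> carrier G" "p1 \<in> carrier G" "p2 \<in> carrier G" "p3 \<in> carrier G" using p0 p1 p2 p3 PG by auto
  have yy: "y \<otimes> y \<noteq> \<one>"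
  proof
    assume "y \<otimes> y = \<one>"
    hence "y \<otimes> y = \<one> \<otimes> \<one>" by simp
    hence "y = \<one>" using SID[OF y(1) y(1) oneM oneM] by blast
    thus False using y by simp
  qed
  have d01: "p0 \<noteq> p1" using p1 G yG y by auto
  have d12: "p1 \<noteq> p2" using p2 G yG y by auto
  have d02: "p0 \<noteq> p2"
  proof
    assume "p0 = p2"
    hence "p2 \<otimes> (y \<otimes> y) = p2" using p1 p2 G yG by (simp add: m_assoc[symmetric])
    thus False using yy G yG by simp
  qed
  have "{p0, p1, p2} \<subseteq> P" using p0 p1 p2 by blast
  moreover have "card {p0, p1, p2} = 3" using d01 d12 d02 by simp
  ultimately have Peq: "P = {p0, p1, p2}" using card_subset_eq[OF finP] cP by metis
  hence "p3 = p0 \<or> p3 = p1 \<or> p3 = p2" using p3 by blast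
  thus ?thesis
  proof (elim disjE)
    assume e0: "p3 = p0"
    have e: "((p3 \<otimes> y) \<otimes> y) \<otimes> y = p0" using p1 p2 p3 by simp
    have "((p3 \<otimes> y) \<otimes> y) \<otimes> y = p3 \<otimes> (y \<otimes> y \<otimes> y)" using G yG by (simp add: m_assoc)
    hence "p3 \<otimes> (y \<otimes> y \<otimes> y) = p3" using e e0 by simp
    thus ?thesis using G yG by simp
  next
    assume e1: "p3 = p1"
    have e: "(p3 \<otimes> y) \<otimes> y = p1" using p2 p3 by simp
    have "(p3 \<otimes> y) \<otimes> y = p3 \<otimes> (y \<otimes> y)" using G yG by (simp add: m_assoc)
    hence "p3 \<otimes> (y \<otimes> y) = p3" using e e1 by simp
    hence "y \<otimes> y = \<one>" using G yG by simp
    thus ?thesis using yy by simp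
  next
    assume "p3 = p2"
    hence "p3 \<otimes> y = p3" using p3 by simp
    thus ?thesis using G yG y by simp
  qed
qed


end


context ctx3 begin
lemma sub2b:
  assumes a3: "card M = 3" and x: "x \<in> M" "x \<noteq> \<one>" and y: "y \<in> M" "y \<noteq> \<one>" and xy: "x \<noteq> y"
    and y3: "y \<otimes> y \<otimes> y = \<one>"
  shows "finite (carrier G) \<and> int (card (carrier G)) \<le> 7 + int K"
proof -
  have xG: "x \<in> carrier G" and yG: "y \<in> carrier G" using x y MG by auto
  have Meq: "M = {\<one>, x, y}"
  proof -
    have s: "{\<one>, x, y} \<subseteq> M" using x y oneM by blast
    have "card {\<one>, x, y} = 3" using x y xy by simp
    thus ?thesis using card_subset_eq[OF finM s] a3 by simp
  qed
  have a3': "3 \<le> card M" using a3 by simp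
  note XF = XX_facts[OF x y xy a3']
  note UF = UU_facts[OF x]
  have yy: "y \<otimes> y \<noteq> \<one>"
  proof
    assume "y \<otimes> y = \<one>"
    hence "y \<otimes> y = \<one> \<otimes> \<one>" by simp
    hence "y = \<one>" using SID[OF y(1) y(1) oneM oneM] by blast
    thus False using y by simp
  qed
  have y3': "y \<otimes> (y \<otimes> y) = \<one>" using y3 yG by (simp add: m_assoc)
  have Xsub: "XX x y \<subseteq> {\<one>, x, y, x \<otimes> x, x \<otimes> y, y \<otimes> y}"
  proof -
    have "tr x M = {\<one> \<otimes> x, x \<otimes> x, y \<otimes> x}" unfolding tr_def using Meq by simp
    moreover have "tr y M = {\<one> \<otimes> y, x \<otimes> y, y \<otimes> y}" unfolding tr_def using Meq by simp
    moreover have "y \<otimes> x = x \<otimes> y" using m_comm[OF yG xG] .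
    moreover have "\<one> \<otimes> x = x" "\<one> \<otimes> y = y" using xG yG by simp_all
    ultimately show ?thesis unfolding XX_def UU_def using Meq by auto
  qed
  have notin: "x \<otimes> (y \<otimes> y) \<notin> {\<one>, x, y, x \<otimes> x, x \<otimes> y, y \<otimes> y}"
  proof
    assume "x \<otimes> (y \<otimes> y) \<in> {\<one>, x, y, x \<otimes> x, x \<otimes> y, y \<otimes> y}"
    hence "x \<otimes> (y \<otimes> y) = \<one> \<or> x \<otimes> (y \<otimes> y) = x \<or> x \<otimes> (y \<otimes> y) = y \<or>
      x \<otimes> (y \<otimes> y) = x \<otimes> x \<or> x \<otimes> (y \<otimes> y) = x \<otimes> y \<or> x \<otimes> (y \<otimes> y) = y \<otimes> y" by blast
    thus False
    proof (elim disjE)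
      assume e: "x \<otimes> (y \<otimes> y) = \<one>"
      have "(x \<otimes> (y \<otimes> y)) \<otimes> y = x \<otimes> (y \<otimes> y \<otimes> y)" using xG yG by (simp add: m_assoc)
      hence "y = x" using e y3 xG yG by simp
      thus False using xy by simp
    next
      assume "x \<otimes> (y \<otimes> y) = x"
      thus False using yy xG yG by simp
    next
      assume e: "x \<otimes> (y \<otimes> y) = y"
      have "(x \<otimes> y) \<otimes> y = \<one> \<otimes> y" using e xG yG by (simp add: m_assoc)
      hence "x \<otimes> y = \<one> \<otimes> \<one>" using xG yG by simp
      hence "x = \<one>" using SID[OF x(1) y(1) oneM oneM] by blast
      thus False using x by simp
    next
      assume e: "x \<otimes> (y \<otimes> y) = x \<otimes> x"
      have "y \<otimes> y = x" using lcan[OF xG _ xG e] yG by simp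
      hence "y \<otimes> y = x \<otimes> \<one>" using xG by simp
      hence "y = x \<or> y = \<one>" using SID[OF y(1) y(1) x(1) oneM] by blast
      thus False using xy y by auto
    next
      assume e: "x \<otimes> (y \<otimes> y) = x \<otimes> y"
      have "y \<otimes> y = y" using lcan[OF xG _ yG e] yG by simp
      hence "y = \<one>" using yG by simp
      thus False using y by simp
    next
      assume "x \<otimes> (y \<otimes> y) = y \<otimes> y"
      hence "x = \<one>" using xG yG by simp
      thus False using x by simp
    qed
  qed
  have yyG: "y \<otimes> y \<in> carrier G" using yG by simp
  define Y2 where "Y2 = tr (y \<otimes> y) M"
  have T: "adm Y2" "dl Y2 = int K" "card Y2 = card M" "Y2 \<subseteq> carrier G" "finite Y2"
    using trM[OF yyG] unfolding Y2_def by blast+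
  have I: "XX x y \<inter> Y2 = {\<one>, y \<otimes> y}"
  proof
    show "XX x y \<inter> Y2 \<subseteq> {\<one>, y \<otimes> y}"
    proof
      fix w assume w: "w \<in> XX x y \<inter> Y2"
      then obtain m where m: "m \<in> M" "w = m \<otimes> (y \<otimes> y)" unfolding Y2_def tr_def by blast
      have "m = \<one> \<or> m = x \<or> m = y" using m Meq by blast
      thus "w \<in> {\<one>, y \<otimes> y}"
      proof (elim disjE)
        assume "m = \<one>" thus ?thesis using m yG by simp
      next
        assume "m = x" thus ?thesis using m w Xsub notin by blast
      next
        assume "m = y" thus ?thesis using m y3' by simp
      qed
    qed
    have "\<one> \<in> XX x y" unfolding XX_def UU_def using oneM by blast
    moreover have "\<one> \<in> Y2" unfolding Y2_def tr_def using y3' y by (metis image_eqI)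
    moreover have "y \<otimes> y \<in> XX x y" unfolding XX_def tr_def using y by blast
    moreover have "y \<otimes> y = \<one> \<otimes> (y \<otimes> y)" using yG by simp
    hence "y \<otimes> y \<in> Y2" unfolding Y2_def tr_def using oneM by blast
    ultimately show "{\<one>, y \<otimes> y} \<subseteq> XX x y \<inter> Y2" by blast
  qed
  have cI: "card (XX x y \<inter> Y2) = 2" using I yy by simp
  have aI: "adm (XX x y \<inter> Y2)" using adm_subset[OF T(1), of "XX x y \<inter> Y2"] cI by simp
  have dI: "int K + 1 \<le> dl (XX x y \<inter> Y2)" using small[OF aI] cI a3 by simp
  have sm: "dl (XX x y \<union> Y2) + dl (XX x y \<inter> Y2) \<le> dl (XX x y) + dl (Y2)"
    using submod[OF XF(1) T(5) XF(2) T(4)] .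
  have dX: "dl (XX x y \<union> Y2) < int K" using sm dI XF(4) UF(4) T by linarith
  have cX: "card (XX x y \<union> Y2) + card (XX x y \<inter> Y2) = card (XX x y) + card (Y2)"
    using card_Un_Int[OF XF(1) T(5)] by simp
  have c7: "card (XX x y \<union> Y2) = 7" using cX cI XF(3) T a3 by simp
  have "finite (carrier G) \<and> int (card (carrier G)) \<le> int (card (XX x y \<union> Y2)) + dl (XX x y \<union> Y2) + 1"
  proof (rule conclude)
    show "XX x y \<union> Y2 \<subseteq> carrier G" using XF(2) T(4) by blast
    show "finite (XX x y \<union> Y2)" using XF(1) T(5) by blast
  qed (use c7 dX in auto)
  thus ?thesis using c7 dX by linarith
qed

end



context ctx3 begin

lemma card3_le: "card {a, b, c} \<le> 3"
  by (simp add: card_insert_if)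

lemma reduce:
  assumes a3: "3 \<le> card M"
  shows "finite (carrier G) \<and> card Cc + 2 \<le> 2 * card M \<and>
    (\<exists>W. finite W \<and> 3 * card M \<le> card W + 3 \<and> W \<subseteq> carrier G \<and> (\<forall>w\<in>W. \<exists>m1\<in>M. \<exists>m2\<in>M. w = m1 \<otimes> m2))"
proof -
  have "card (M - {\<one>}) = card M - 1" using oneM finM by simp
  hence "0 < card (M - {\<one>})" using a3 by linarith
  hence "M - {\<one>} \<noteq> {}" by (simp add: card_gt_0_iff)
  then obtain x where x: "x \<in> M" "x \<noteq> \<one>" by blast
  have s2: "{\<one>, x} \<subseteq> M" using oneM x by blast
  have "card (M - {\<one>, x}) = card M - card {\<one>, x}" using card_Diff_subset[OF _ s2] by simp
  moreover have "card {\<one>, x} = 2" using x by simp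
  ultimately have "0 < card (M - {\<one>, x})" using a3 by linarith
  hence "M - {\<one>, x} \<noteq> {}" by (simp add: card_gt_0_iff)
  then obtain y where y0: "y \<in> M" "y \<noteq> \<one>" "y \<noteq> x" by blast
  have y: "y \<in> M" "y \<noteq> \<one>" using y0 by auto
  have xy: "x \<noteq> y" using y0 by auto
  have xG: "x \<in> carrier G" and yG: "y \<in> carrier G" using x y MG by auto
  note UF = UU_facts[OF x]
  note XF = XX_facts[OF x y xy a3]
  have W: "\<exists>W. finite W \<and> 3 * card M \<le> card W + 3 \<and> W \<subseteq> carrier G \<and> (\<forall>w\<in>W. \<exists>m1\<in>M. \<exists>m2\<in>M. w = m1 \<otimes> m2)"
  proof -
    have "\<forall>w\<in>XX x y. \<exists>m1\<in>M. \<exists>m2\<in>M. w = m1 \<otimes> m2" using XF(5) by blast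
    moreover have "3 * card M \<le> card (XX x y) + 3" using XF(3) by simp
    ultimately show ?thesis using XF(1,2) by blast
  qed
  have cX2: "2 \<le> card (XX x y)" using XF(3) a3 by linarith
  have main: "finite (carrier G) \<and> int (card (carrier G)) \<le> 3 * int (card M) - 2 + int K"
  proof (cases "card M = 3")
    case a3e: True
    show ?thesis
    proof (cases "dl (UU x) \<le> int K")
      case True
      have "dl (XX x y) < int K" using XF(4) True by linarith
      hence "finite (carrier G) \<and> int (card (carrier G)) \<le> int (card (XX x y)) + dl (XX x y) + 1"
        using conclude[OF XF(2) XF(1) cX2] by blast
      thus ?thesis using XF(3) a3e \<open>dl (XX x y) < int K\<close> by linarith
    next
      case False
      have "y \<otimes> y \<otimes> y = \<one>" using y3[OF a3e x y xy] False by linarith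
      hence "finite (carrier G) \<and> int (card (carrier G)) \<le> 7 + int K" using sub2b[OF a3e x y xy] by blast
      thus ?thesis using a3e by linarith
    qed
  next
    case False
    hence a4: "4 \<le> card M" using a3 by linarith
    have s3: "{\<one>, x, y} \<subseteq> M" using oneM x y by blast
    have "card (M - {\<one>, x, y}) = card M - card {\<one>, x, y}" using card_Diff_subset[OF _ s3] by simp
    moreover have "card {\<one>, x, y} = 3" using x y xy by simp
    ultimately have "0 < card (M - {\<one>, x, y})" using a4 by linarith
    hence "M - {\<one>, x, y} \<noteq> {}" by (simp add: card_gt_0_iff)
    then obtain z where z0: "z \<in> M" "z \<noteq> \<one>" "z \<noteq> x" "z \<noteq> y" by blast
    have z: "z \<in> M" "z \<noteq> \<one>" using z0 by auto
    have zG: "z \<in> carrier G" using z MG by auto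
    define Tz where "Tz = tr z M"
    have T: "adm Tz" "dl Tz = int K" "card Tz = card M" "Tz \<subseteq> carrier G" "finite Tz"
      using trM[OF zG] unfolding Tz_def by blast+
    define W3 where "W3 = XX x y \<inter> Tz"
    have W3s: "W3 \<subseteq> {z, x \<otimes> z, y \<otimes> z}"
      using M_inter[OF z] inter_tr_le1[OF x(1) z(1)] inter_tr_le1[OF y(1) z(1)] z0
      unfolding W3_def Tz_def XX_def UU_def by blast
    have zW: "z \<in> W3"
    proof -
      have "z = \<one> \<otimes> z" using zG by simp
      hence "z \<in> Tz" unfolding Tz_def tr_def using oneM by blast
      thus ?thesis unfolding W3_def XX_def UU_def using z by blast
    qed
    have xzW: "x \<otimes> z \<in> W3"
    proof -
      have "x \<otimes> z \<in> Tz" unfolding Tz_def tr_def using x by blast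
      moreover have "x \<otimes> z = z \<otimes> x" using m_comm xG zG by blast
      hence "x \<otimes> z \<in> tr x M" unfolding tr_def using z by (metis image_eqI)
      ultimately show ?thesis unfolding W3_def XX_def UU_def by blast
    qed
    have ne: "z \<noteq> x \<otimes> z" using x xG zG by simp
    have finW3: "finite W3" unfolding W3_def using T by blast
    have cW3: "2 \<le> card W3"
    proof -
      have "card {z, x \<otimes> z} \<le> card W3" by (rule card_mono[OF finW3]) (use zW xzW in blast)
      thus ?thesis using ne by simp
    qed
    have cW3': "card W3 \<le> 3" using card_mono[OF _ W3s] card3_le by (meson finite.emptyI finite_insert le_trans)
    have aW3: "adm W3" using adm_subset[OF T(1), of W3] cW3 unfolding W3_def by blast
    have dW3: "int K + 1 \<le> dl W3" using small[OF aW3] cW3' a4 by linarith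
    define X3 where "X3 = XX x y \<union> Tz"
    have sm: "dl X3 + dl W3 \<le> dl (XX x y) + dl Tz"
      unfolding X3_def W3_def using submod[OF XF(1) T(5) XF(2) T(4)] .
    have dX3: "dl X3 < int K" using sm dW3 T(2) XF(4) UF(4) by linarith
    have cX3: "card X3 + card W3 = card (XX x y) + card M"
      unfolding X3_def W3_def using card_Un_Int[OF XF(1) T(5)] T(3) by simp
    have X3G: "X3 \<subseteq> carrier G" and finX3: "finite X3" unfolding X3_def using XF(1,2) T(4,5) by auto
    have cX3': "2 \<le> card X3" using cX3 cX2 cW3' a4 by linarith
    have c3: "finite (carrier G) \<and> int (card (carrier G)) \<le> int (card X3) + dl X3 + 1"
      using conclude[OF X3G finX3 cX3' dX3] .
    hence fin: "finite (carrier G)" by blast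
    have dX2: "dl (XX x y) \<le> int K" using XF(4) UF(4) by linarith
    have nadm: "\<not> adm (XX x y)"
    proof
      assume aX2: "adm (XX x y)"
      have "card M + card (img (XX x y)) \<le> card (carrier G)" using ND[OF fin aX2 dX2] .
      moreover have "int K \<le> dl (XX x y)" using K_le[OF aX2] .
      ultimately show False using c3 dl_card[of "XX x y"] cX3 cW3 dX3 by linarith
    qed
    have "finite (carrier G) \<and> card (carrier G) \<le> card (img (XX x y)) + 1"
      using notadm[OF XF(2) XF(1) cX2 nadm] .
    thus ?thesis using dl_card[of "XX x y"] dX2 XF(3) by linarith
  qed
  have fin: "finite (carrier G)" using main by blast
  have "card Cc + 2 \<le> 2 * card M" using main N_eq[OF fin] by linarith
  thus ?thesis using fin W by blast
qed

lemma final: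
  assumes a3: "3 \<le> card M"
  shows "finite (carrier G) \<and> K = card S \<and> card (carrier G) = card S + 6"
proof -
  obtain W where W: "finite W" "3 * card M \<le> card W + 3" "W \<subseteq> carrier G"
    "\<forall>w\<in>W. \<exists>m1\<in>M. \<exists>m2\<in>M. w = m1 \<otimes> m2" and fin: "finite (carrier G)"
    and cC: "card Cc + 2 \<le> 2 * card M" using reduce[OF a3] by blast
  have "card M = 3 \<and> K = card S \<and> card (carrier G) = card S + 6"
    by (rule PA[OF fin a3 cC W(1-3)]) (use W(4) in blast)
  thus ?thesis using fin by blast
qed

end

theorem mainTheorem15:
  fixes G (structure) and S M :: "'a set"
  assumes "comm_group G"
    and "finite S" and "S \<subseteq> carrier G" and "generate G S = carrier G"
    and "\<one> \<in> S"
    and "k_separable G S 2"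
    and "defect G S \<le> 0"
    and "defect G S = 0 \<Longrightarrow> finite (carrier G) \<Longrightarrow> int (card S) \<noteq> int (card (carrier G)) - 6"
    and "k_atom G S 2 M" and "\<one> \<in> M" and "\<not> subgroup M G"
  shows "card M = 2"
proof (rule ccontr)
  assume ne: "card M \<noteq> 2"
  have kS: "kappa G S 2 \<le> card S" using assms(7) unfolding defect_def by simp
  interpret c: ctx3 G S M
    by (intro ctx3.intro ctx2.intro ctx.intro ctx3_axioms.intro ctx2_axioms.intro ctx_axioms.intro)
       (use assms kS in auto)
  have "3 \<le> card M" using c.cardM2 ne by simp
  hence f: "finite (carrier G) \<and> kappa G S 2 = card S \<and> card (carrier G) = card S + 6"
    using c.final by blast
  hence "defect G S = 0" unfolding defect_def by simp
  thus False using assms(8) f by simp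
qed


end
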